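(* Let $\theta\in\mathcal X:=\prod_{s\in\mathcal S}\Delta(\mathcal A)$ and $\pi_\theta(a|s)=\theta_{s,a}$, and assume $d^{\pi_\theta,\hat P^{\pi_\theta}}(s)>0$ for all $s$. Define $G(\theta)\in\mathbb R^{\mathcal S\times\mathcal A}$ by $[G(\theta)]_{s,a}=\frac{1}{1-\gamma}d^{\pi_\theta,\hat P^{\pi_\theta}}(s)Q^{\pi_\theta}(s,a)$. Then $$\mathbb E_{s_0\sim\rho}\big(V^\star(s_0)-V^{\pi_\theta}(s_0)\big)\le\Big\|\frac{d^{\pi^\star,\hat P^{\pi_\theta}}}{d^{\pi_\theta,\hat P^{\pi_\theta}}}\Big\|_\infty\max_{\bar\pi\in\mathcal X}\langle\bar\pi-\pi_\theta,G(\theta)\rangle,$$ where $\big\|\frac{d^{\pi^\star,\hat P^{\pi_\theta}}}{d^{\pi_\theta,\hat P^{\pi_\theta}}}\big\|_\infty:=\max_s\frac{d^{\pi^\star,\hat P^{\pi_\theta}}(s)}{d^{\pi_\theta,\hat P^{\pi_\theta}}(s)}$ and $\pi^\star(s)\in\arg\max_a(r(s,a)-\gamma\sigma(P_{s,a},V^\star))$ (viewed as a deterministic policy).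
   Context: $\mathcal S$ and $\mathcal A$ are finite sets; $\Delta(\mathcal X)$ denotes the probability simplex over a finite set $\mathcal X$. $P=\{P_{s,a}\}$ with $P_{s,a}\in\Delta(\mathcal S)$ is the nominal transition kernel, $r:\mathcal S\times\mathcal A\to[0,1]$, $\gamma\in[0,1)$, $\rho\in\Delta(\mathcal S)$. A stationary policy is a map $\pi:\mathcal S\to\Delta(\mathcal A)$. A function $\sigma:\mathbb R^{\mathcal S}\to\mathbb R$ is a convex risk measure if (i) $V'\le V$ pointwise implies $\sigma(V)\le\sigma(V')$; (ii) $\sigma(V+m)=\sigma(V)-m$ for every constant $m$; (iii) $\sigma$ is convex. For each $(s,a)$ a convex risk measure $\sigma(P_{s,a},\cdot)$ is given, with penalty $D(\hat\mu,P_{s,a}):=\sup_{V}\big(-\sigma(P_{s,a},V)-\mathbb E_{s'\sim\hat\mu}V(s')\big)$. For a policy $\pi$, $V^\pi$ is the unique solution of $V^\pi(s)=\sum_a\pi(a|s)(r(s,a)-\gamma\sigma(P_{s,a},V^\pi))$, $Q^\pi(s,a):=r(s,a)-\gamma\sigma(P_{s,a},V^\pi)$; $V^\star$ is the unique solution of $V^\star(s)=\max_a(r(s,a)-\gamma\sigma(P_{s,a},V^\star))$. $\hat P^\pi_{s,a}\in\arg\min_{\hat\mu\in\Delta(\mathcal S)}\big(D(\hat\mu,P_{s,a})+\mathbb E_{s'\sim\hat\mu}V^\pi(s')\big)$. For a policy $\pi$ and stationary kernel $K$, $d^{\pi,K}(s):=(1-\gamma)\sum_{t\ge0}\gamma^t\Pr(s_t=s)$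 with $s_0\sim\rho$, $a_t\sim\pi(\cdot|s_t)$, $s_{t+1}\sim K_{s_t,a_t}$. The inner product is $\langle x,y\rangle=\sum_{s,a}x_{s,a}y_{s,a}$. *)

theory Defs
  imports "HOL-Analysis.Analysis"
begin

definition prob_simplex :: "('x::finite \<Rightarrow> real) set" where
  "prob_simplex = {p. (\<forall>x. 0 \<le> p x) \<and> sum p UNIV = 1}"

definition convex_risk :: "(('s::finite \<Rightarrow> real) \<Rightarrow> real) \<Rightarrow> bool" where
  "convex_risk \<sigma> \<longleftrightarrow>
     (\<forall>V V'. (\<forall>s. V' s \<le> V s) \<longrightarrow> \<sigma> V \<le> \<sigma> V') \<and>
     (\<forall>V m. \<sigma> (\<lambda>s. V s + m) = \<sigma> V - m) \<and>
     (\<forall>V W t. 0 \<le> t \<and> t \<le> 1 \<longrightarrow>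
        \<sigma> (\<lambda>s. t * V s + (1 - t) * W s) \<le> t * \<sigma> V + (1 - t) * \<sigma> W)"

definition penalty ::
  "(('s::finite \<Rightarrow> real) \<Rightarrow> ('s \<Rightarrow> real) \<Rightarrow> real) \<Rightarrow> ('s \<Rightarrow> real) \<Rightarrow> ('s \<Rightarrow> real) \<Rightarrow> ereal" where
  "penalty risk mu p = (SUP V. ereal (- risk p V - (\<Sum>s\<in>UNIV. mu s * V s)))"

definition V_pi ::
  "(('s::finite \<Rightarrow> real) \<Rightarrow> ('s \<Rightarrow> real) \<Rightarrow> real) \<Rightarrow> ('s \<Rightarrow> 'a::finite \<Rightarrow> 's \<Rightarrow> real)
   \<Rightarrow> ('s \<Rightarrow> 'a \<Rightarrow> real) \<Rightarrow> real \<Rightarrow> ('s \<Rightarrow> 'a \<Rightarrow> real) \<Rightarrow> ('s \<Rightarrow> real)" where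
  "V_pi risk P r \<gamma> \<pi> = (THE V. \<forall>s. V s = (\<Sum>a\<in>UNIV. \<pi> s a * (r s a - \<gamma> * risk (P s a) V)))"

definition Q_pi ::
  "(('s::finite \<Rightarrow> real) \<Rightarrow> ('s \<Rightarrow> real) \<Rightarrow> real) \<Rightarrow> ('s \<Rightarrow> 'a::finite \<Rightarrow> 's \<Rightarrow> real)
   \<Rightarrow> ('s \<Rightarrow> 'a \<Rightarrow> real) \<Rightarrow> real \<Rightarrow> ('s \<Rightarrow> 'a \<Rightarrow> real) \<Rightarrow> 's \<Rightarrow> 'a \<Rightarrow> real" where
  "Q_pi risk P r \<gamma> \<pi> s a = r s a - \<gamma> * risk (P s a) (V_pi risk P r \<gamma> \<pi>)"

definition V_star ::
  "(('s::finite \<Rightarrow> real) \<Rightarrow> ('s \<Rightarrow> real) \<Rightarrow> real) \<Rightarrow> ('s \<Rightarrow> 'a::finite \<Rightarrow> 's \<Rightarrow> real)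
   \<Rightarrow> ('s \<Rightarrow> 'a \<Rightarrow> real) \<Rightarrow> real \<Rightarrow> ('s \<Rightarrow> real)" where
  "V_star risk P r \<gamma> = (THE V. \<forall>s. V s = (MAX a. r s a - \<gamma> * risk (P s a) V))"

definition worst_kernel ::
  "(('s::finite \<Rightarrow> real) \<Rightarrow> ('s \<Rightarrow> real) \<Rightarrow> real) \<Rightarrow> ('s \<Rightarrow> 'a::finite \<Rightarrow> 's \<Rightarrow> real)
   \<Rightarrow> ('s \<Rightarrow> real) \<Rightarrow> ('s \<Rightarrow> 'a \<Rightarrow> 's \<Rightarrow> real) \<Rightarrow> bool" where
  "worst_kernel risk P V Phat \<longleftrightarrow>
     (\<forall>s a. Phat s a \<in> prob_simplex \<and>
        (\<forall>mu \<in> prob_simplex. penalty risk (Phat s a) (P s a) + ereal (\<Sum>s'\<in>UNIV. Phat s a s' * V s')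
                         \<le> penalty risk mu (P s a) + ereal (\<Sum>s'\<in>UNIV. mu s' * V s')))"

primrec state_dist ::
  "('s::finite \<Rightarrow> real) \<Rightarrow> ('s \<Rightarrow> 'a::finite \<Rightarrow> real) \<Rightarrow> ('s \<Rightarrow> 'a \<Rightarrow> 's \<Rightarrow> real) \<Rightarrow> nat \<Rightarrow> 's \<Rightarrow> real" where
  "state_dist \<rho> \<pi> K 0 = \<rho>"
| "state_dist \<rho> \<pi> K (Suc t) =
     (\<lambda>s'. \<Sum>s\<in>UNIV. state_dist \<rho> \<pi> K t s * (\<Sum>a\<in>UNIV. \<pi> s a * K s a s'))"

definition occ ::
  "real \<Rightarrow> ('s::finite \<Rightarrow> real) \<Rightarrow> ('s \<Rightarrow> 'a::finite \<Rightarrow> real) \<Rightarrow> ('s \<Rightarrow> 'a \<Rightarrow> 's \<Rightarrow> real) \<Rightarrow> 's \<Rightarrow> real" where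
  "occ \<gamma> \<rho> \<pi> K s = (1 - \<gamma>) * (\<Sum>t. \<gamma> ^ t * state_dist \<rho> \<pi> K t s)"

definition det_policy :: "('s \<Rightarrow> 'a) \<Rightarrow> 's \<Rightarrow> 'a \<Rightarrow> real" where
  "det_policy f s a = (if a = f s then 1 else 0)"

end

theory Submission
  imports Defs
begin



definition supn :: "('s::finite \<Rightarrow> real) \<Rightarrow> real" where
  "supn V = Max (range (\<lambda>s. \<bar>V s\<bar>))"

lemma supn_ge: "\<bar>V s\<bar> \<le> supn V"
  unfolding supn_def by (rule Max_ge) auto

lemma supn_le: "(\<And>s. \<bar>V s\<bar> \<le> c) \<Longrightarrow> supn V \<le> c"
  unfolding supn_def by (subst Max_le_iff) auto

lemma supn_nonneg: "0 \<le> supn V"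
  using supn_ge[of V undefined] by linarith

lemma supn_le_sum: "supn V \<le> (\<Sum>s\<in>UNIV. \<bar>V s\<bar>)"
  by (rule supn_le) (rule member_le_sum, auto)

lemma risk_lip:
  assumes cr: "convex_risk \<sigma>"
  shows "\<bar>\<sigma> V - \<sigma> W\<bar> \<le> supn (\<lambda>s. V s - W s)"
proof -
  let ?c = "supn (\<lambda>s. V s - W s)"
  have mono: "\<And>A B. (\<forall>s. B s \<le> A s) \<Longrightarrow> \<sigma> A \<le> \<sigma> B" and tr: "\<And>A m. \<sigma> (\<lambda>s. A s + m) = \<sigma> A - m"
    using cr unfolding convex_risk_def by blast+
  have b: "\<bar>V s - W s\<bar> \<le> ?c" for s by (rule supn_ge)
  have h1: "\<forall>s. W s \<le> V s + ?c"
  proof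
    fix s show "W s \<le> V s + ?c" using b[of s] by linarith
  qed
  have h2: "\<forall>s. V s \<le> W s + ?c"
  proof
    fix s show "V s \<le> W s + ?c" using b[of s] by linarith
  qed
  have "\<sigma> (\<lambda>s. V s + ?c) \<le> \<sigma> W" by (rule mono) (use h1 in auto)
  moreover have "\<sigma> (\<lambda>s. W s + ?c) \<le> \<sigma> V" by (rule mono) (use h2 in auto)
  ultimately show ?thesis using tr[of V ?c] tr[of W ?c] by linarith
qed

lemma contraction_fix:
  fixes F :: "('s::finite \<Rightarrow> real) \<Rightarrow> ('s \<Rightarrow> real)"
  assumes g: "0 \<le> g" "g < 1"
    and c: "\<And>V W s. \<bar>F V s - F W s\<bar> \<le> g * supn (\<lambda>s. V s - W s)"
  shows "\<exists>!V. F V = V"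
proof -
  define x where "x n = (F ^^ n) (\<lambda>_. 0)" for n
  have xS: "x (Suc n) = F (x n)" for n by (simp add: x_def)
  define d where "d n = supn (\<lambda>s. x (Suc n) s - x n s)" for n
  have dS: "d (Suc n) \<le> g * d n" for n
    unfolding d_def by (rule supn_le) (simp add: xS c)
  have dn: "d n \<le> g ^ n * d 0" for n
  proof (induction n)
    case (Suc n)
    have "d (Suc n) \<le> g * d n" by (rule dS)
    also have "\<dots> \<le> g * (g ^ n * d 0)" using Suc g by (simp add: mult_left_mono)
    finally show ?case by simp
  qed simp
  have step: "\<bar>x (Suc n) s - x n s\<bar> \<le> d 0 * g ^ n" for n s
    using supn_ge[of "\<lambda>s. x (Suc n) s - x n s" s] dn[of n] unfolding d_def by (simp add: mult.commute)
  have conv: "convergent (\<lambda>n. x n s)" for s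
  proof -
    have sm: "summable (\<lambda>n. x (Suc n) s - x n s)"
      by (rule summable_comparison_test[where g="\<lambda>n. d 0 * g ^ n"])
         (use step g in \<open>auto intro!: summable_mult summable_geometric\<close>)
    have "(\<lambda>n. \<Sum>k<n. x (Suc k) s - x k s) \<longlonglongrightarrow> suminf (\<lambda>n. x (Suc n) s - x n s)"
      by (rule summable_LIMSEQ[OF sm])
    then have "(\<lambda>n. x 0 s + (\<Sum>k<n. x (Suc k) s - x k s)) \<longlonglongrightarrow> x 0 s + suminf (\<lambda>n. x (Suc n) s - x n s)"
      by (intro tendsto_intros)
    then show ?thesis using sum_lessThan_telescope[of "\<lambda>k. x k s"] by (auto simp: convergent_def)
  qed
  define L where "L s = lim (\<lambda>n. x n s)" for s
  have xL: "(\<lambda>n. x n s) \<longlonglongrightarrow> L s" for s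
    unfolding L_def using conv convergent_LIMSEQ_iff by blast
  have sumz: "(\<lambda>n. \<Sum>s\<in>UNIV. \<bar>x n s - L s\<bar>) \<longlonglongrightarrow> 0"
  proof -
    have "(\<lambda>n. \<Sum>s\<in>UNIV. \<bar>x n s - L s\<bar>) \<longlonglongrightarrow> (\<Sum>s\<in>(UNIV::'s set). \<bar>L s - L s\<bar>)"
      by (intro tendsto_intros xL)
    then show ?thesis by simp
  qed
  have fixL: "F L s = L s" for s
  proof -
    have "(\<lambda>n. F (x n) s - F L s) \<longlonglongrightarrow> 0"
    proof (rule Lim_null_comparison)
      show "\<forall>\<^sub>F n in sequentially. norm (F (x n) s - F L s) \<le> g * (\<Sum>s\<in>UNIV. \<bar>x n s - L s\<bar>)"
      proof (rule always_eventually, rule allI)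
        fix n
        show "norm (F (x n) s - F L s) \<le> g * (\<Sum>s\<in>UNIV. \<bar>x n s - L s\<bar>)"
          using c[of "x n" s L] supn_le_sum[of "\<lambda>s. x n s - L s"] g
          by (simp add: order.trans[OF _ mult_left_mono])
      qed
      show "(\<lambda>n. g * (\<Sum>s\<in>UNIV. \<bar>x n s - L s\<bar>)) \<longlonglongrightarrow> 0"
        using tendsto_mult[OF tendsto_const sumz, of g] by simp
    qed
    then have "(\<lambda>n. F (x n) s) \<longlonglongrightarrow> F L s"
      by (simp add: LIM_zero_iff)
    moreover have "(\<lambda>n. F (x n) s) \<longlonglongrightarrow> L s"
      using LIMSEQ_Suc[OF xL[of s]] by (simp add: xS)
    ultimately show ?thesis using LIMSEQ_unique by blast
  qed
  show ?thesis
  proof (rule ex1I[of _ L])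
    show "F L = L" using fixL by auto
  next
    fix V assume V: "F V = V"
    have "supn (\<lambda>s. V s - L s) \<le> g * supn (\<lambda>s. V s - L s)"
      by (rule supn_le) (metis V fixL c)
    then have "supn (\<lambda>s. V s - L s) \<le> 0"
    proof -
      let ?S = "supn (\<lambda>s. V s - L s)"
      assume h: "?S \<le> g * ?S"
      have "(1 - g) * ?S \<le> 0" using h by (simp add: algebra_simps)
      moreover have "0 < 1 - g" using g by simp
      ultimately show "?S \<le> 0" by (simp add: mult_le_0_iff)
    qed
    show "V = L"
    proof
      fix s
      show "V s = L s" using supn_ge[of "\<lambda>s. V s - L s" s] \<open>supn (\<lambda>s. V s - L s) \<le> 0\<close> by linarith
    qed
  qed
qed



lemma risk_subgrad:
  fixes \<sigma> :: "('s::finite \<Rightarrow> real) \<Rightarrow> real"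
  assumes cr: "convex_risk \<sigma>"
  shows "\<exists>\<mu>\<in>prob_simplex. \<forall>W. \<sigma> V - (\<Sum>s\<in>UNIV. \<mu> s * (W s - V s)) \<le> \<sigma> W"
proof -
  have mono: "\<And>A B. (\<forall>s. B s \<le> A s) \<Longrightarrow> \<sigma> A \<le> \<sigma> B"
    and tr: "\<And>A m. \<sigma> (\<lambda>s. A s + m) = \<sigma> A - m"
    and cvx: "\<And>A B t. 0 \<le> t \<Longrightarrow> t \<le> 1 \<Longrightarrow> \<sigma> (\<lambda>s. t * A s + (1 - t) * B s) \<le> t * \<sigma> A + (1 - t) * \<sigma> B"
    using cr unfolding convex_risk_def by blast+
  define f :: "real^'s \<Rightarrow> real" where "f x = \<sigma> (\<lambda>s. x$s)" for x
  define v0 :: "real^'s" where "v0 = (\<chi> s. V s)"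
  have fv0: "f v0 = \<sigma> V" by (simp add: f_def v0_def)
  define S :: "((real^'s) \<times> real) set" where "S = {(x,y). f x < y}"
  have convS: "convex S"
    unfolding convex_def
  proof (intro ballI allI impI)
    fix z1 z2 :: "(real^'s) \<times> real" and u v :: real
    assume z: "z1 \<in> S" "z2 \<in> S" and uv: "0 \<le> u" "0 \<le> v" "u + v = 1"
    have vu: "v = 1 - u" using uv by simp
    obtain x1 y1 x2 y2 where zz: "z1 = (x1,y1)" "z2 = (x2,y2)" by fastforce
    have l1: "f x1 < y1" "f x2 < y2" using z zz by (auto simp: S_def)
    have "f (u *\<^sub>R x1 + v *\<^sub>R x2) = \<sigma> (\<lambda>s. u * x1$s + (1 - u) * x2$s)"
    proof -
      have "v = 1 - u" using uv by simp
      then show ?thesis by (simp add: f_def)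
    qed
    also have "\<dots> \<le> u * f x1 + v * f x2"
      using cvx[of u "\<lambda>s. x1$s" "\<lambda>s. x2$s"] uv by (simp add: f_def vu)
    also have "\<dots> < u * y1 + v * y2"
    proof (cases "u = 0")
      case True then show ?thesis using uv l1 by simp
    next
      case False then have "0 < u" using uv by simp
      then have "u * f x1 < u * y1" using l1 by simp
      moreover have "v * f x2 \<le> v * y2" using l1 uv by (simp add: mult_left_mono)
      ultimately show ?thesis using uv by simp
    qed
    finally show "u *\<^sub>R z1 + v *\<^sub>R z2 \<in> S" using zz by (simp add: S_def)
  qed
  have "(0, f 0 + 1) \<in> S" unfolding S_def by simp
  then have "S \<noteq> {}" by blast
  moreover have "{(v0, \<sigma> V)} \<noteq> {}" by simp
  moreover have "S \<inter> {(v0, \<sigma> V)} = {}" using fv0 by (simp add: S_def)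
  ultimately obtain a b where ab: "a \<noteq> 0" "\<forall>z\<in>S. inner a z \<le> b" "\<forall>z\<in>{(v0, \<sigma> V)}. inner a z \<ge> b"
    using separating_hyperplane_sets[OF convS convex_singleton] by blast
  obtain u t where at: "a = (u, t)" by fastforce
  have key: "f x < y \<Longrightarrow> inner u x + t * y \<le> inner u v0 + t * \<sigma> V" for x y
    using ab at by (force simp: S_def)
  have "t \<le> 0" using key[of v0 "\<sigma> V + 1"] fv0 by (simp add: algebra_simps)
  moreover have "t \<noteq> 0"
  proof
    assume t0: "t = 0"
    have "inner u (v0 + u) \<le> inner u v0" using key[of "v0 + u" "f (v0 + u) + 1"] t0 by simp
    then have "inner u u \<le> 0" by (simp add: inner_add_right)
    then have "u = 0" using inner_gt_zero_iff[of u] by linarith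
    then show False using ab(1) at t0 by (simp add: zero_prod_def)
  qed
  ultimately have tn: "0 < - t" by simp
  define c where "c = - t"
  have key2: "inner u x - c * f x \<le> inner u v0 - c * \<sigma> V" for x
  proof (rule field_le_epsilon)
    fix e :: real assume e: "0 < e"
    have "inner u x + t * (f x + e / c) \<le> inner u v0 + t * \<sigma> V"
    proof (rule key)
      have "0 < c" using tn c_def by simp
      then have "0 < e / c" using e by simp
      then show "f x < f x + e / c" by simp
    qed
    then show "inner u x - c * f x \<le> inner u v0 - c * \<sigma> V + e"
      using tn unfolding c_def by (simp add: algebra_simps)
  qed
  define \<mu> where "\<mu> s = - u$s / c" for s
  have sub: "\<sigma> V - (\<Sum>s\<in>UNIV. \<mu> s * (W s - V s)) \<le> \<sigma> W" for W
  proof -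
    have "inner u (\<chi> s. W s) - c * \<sigma> W \<le> inner u v0 - c * \<sigma> V"
      using key2[of "\<chi> s. W s"] by (simp add: f_def)
    then have "c * (\<sigma> V - \<sigma> W) \<le> inner u v0 - inner u (\<chi> s. W s)" by (simp add: algebra_simps)
    also have "\<dots> = (\<Sum>s\<in>UNIV. u$s * (V s - W s))"
      by (simp add: inner_vec_def v0_def sum_subtractf[symmetric] algebra_simps)
    also have "\<dots> = c * (\<Sum>s\<in>UNIV. \<mu> s * (W s - V s))"
      unfolding sum_distrib_left using tn c_def by (intro sum.cong refl) (simp add: \<mu>_def field_simps)
    finally have "c * (\<sigma> V - \<sigma> W) \<le> c * (\<Sum>s\<in>UNIV. \<mu> s * (W s - V s))" .
    then show ?thesis using tn c_def by simp
  qed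
  have nn: "0 \<le> \<mu> s0" for s0
  proof -
    have "\<sigma> (\<lambda>s. V s + (if s = s0 then 1 else 0)) \<le> \<sigma> V" by (rule mono) simp
    moreover have "(\<Sum>s\<in>UNIV. \<mu> s * ((V s + (if s = s0 then 1 else 0)) - V s)) = \<mu> s0"
    proof -
      have "(\<Sum>s\<in>UNIV. \<mu> s * ((V s + (if s = s0 then 1 else 0)) - V s)) = (\<Sum>s\<in>UNIV. if s = s0 then \<mu> s else 0)"
        by (intro sum.cong refl) auto
      then show ?thesis by simp
    qed
    ultimately show ?thesis using sub[of "\<lambda>s. V s + (if s = s0 then 1 else 0)"] by simp
  qed
  have s1: "(\<Sum>s\<in>UNIV. \<mu> s) = 1"
  proof -
    have "\<sigma> V - (\<Sum>s\<in>UNIV. \<mu> s * ((V s + 1) - V s)) \<le> \<sigma> V - 1"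
      using sub[of "\<lambda>s. V s + 1"] tr[of V 1] by simp
    moreover have "\<sigma> V - (\<Sum>s\<in>UNIV. \<mu> s * ((V s + -1) - V s)) \<le> \<sigma> V + 1"
      using sub[of "\<lambda>s. V s + -1"] tr[of V "-1"] by simp
    ultimately show ?thesis by (simp add: sum_negf)
  qed
  show ?thesis using nn s1 sub by (auto simp: prob_simplex_def)
qed



lemma avg_contr:
  fixes w f g :: "'a::finite \<Rightarrow> real"
  assumes "\<And>a. 0 \<le> w a" "sum w UNIV = 1" "\<And>a. \<bar>f a - g a\<bar> \<le> c"
  shows "\<bar>(\<Sum>a\<in>UNIV. w a * f a) - (\<Sum>a\<in>UNIV. w a * g a)\<bar> \<le> c"
proof -
  have "\<bar>(\<Sum>a\<in>UNIV. w a * f a) - (\<Sum>a\<in>UNIV. w a * g a)\<bar> = \<bar>\<Sum>a\<in>UNIV. w a * (f a - g a)\<bar>"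
    by (simp add: sum_subtractf right_diff_distrib)
  also have "\<dots> \<le> (\<Sum>a\<in>UNIV. \<bar>w a * (f a - g a)\<bar>)" by (rule sum_abs)
  also have "\<dots> \<le> (\<Sum>a\<in>UNIV. w a * c)"
    by (rule sum_mono) (simp add: abs_mult assms(1) mult_left_mono assms(3))
  also have "\<dots> = c" using assms(2) by (simp add: sum_distrib_right[symmetric])
  finally show ?thesis .
qed

lemma max_contr:
  fixes f g :: "'a::finite \<Rightarrow> real"
  assumes "\<And>a. \<bar>f a - g a\<bar> \<le> c"
  shows "\<bar>Max (range f) - Max (range g)\<bar> \<le> c"
proof -
  have "Max (range f) \<le> Max (range g) + c"
  proof (subst Max_le_iff, simp, simp, intro ballI)
    fix y assume "y \<in> range f" then obtain a where "y = f a" by auto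
    moreover have "g a \<le> Max (range g)" by (rule Max_ge) auto
    ultimately show "y \<le> Max (range g) + c" using assms[of a] by linarith
  qed
  moreover have "Max (range g) \<le> Max (range f) + c"
  proof (subst Max_le_iff, simp, simp, intro ballI)
    fix y assume "y \<in> range g" then obtain a where "y = g a" by auto
    moreover have "f a \<le> Max (range f)" by (rule Max_ge) auto
    ultimately show "y \<le> Max (range f) + c" using assms[of a] by linarith
  qed
  ultimately show ?thesis by linarith
qed

lemma sd_nonneg:
  assumes "\<And>s. 0 \<le> \<rho> s" "\<And>s a. 0 \<le> \<pi> s a" "\<And>s a s'. 0 \<le> K s a s'"
  shows "0 \<le> state_dist \<rho> \<pi> K t s"
  using assms by (induction t arbitrary: s) (auto intro!: sum_nonneg mult_nonneg_nonneg)

lemma sd_sum: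
  fixes \<rho> :: "'s::finite \<Rightarrow> real" and \<pi> :: "'s \<Rightarrow> 'a::finite \<Rightarrow> real"
  assumes "sum \<rho> UNIV = 1" "\<And>s. sum (\<pi> s) UNIV = 1" "\<And>s a. sum (K s a) UNIV = 1"
  shows "sum (state_dist \<rho> \<pi> K t) UNIV = 1"
proof (induction t)
  case 0 then show ?case using assms by simp
next
  case (Suc t)
  have "sum (state_dist \<rho> \<pi> K (Suc t)) UNIV
      = (\<Sum>s\<in>UNIV. state_dist \<rho> \<pi> K t s * (\<Sum>a\<in>UNIV. \<pi> s a * (\<Sum>s'\<in>UNIV. K s a s')))"
  proof -
    have "sum (state_dist \<rho> \<pi> K (Suc t)) UNIV = (\<Sum>s'\<in>UNIV. \<Sum>s\<in>UNIV. \<Sum>a\<in>UNIV. state_dist \<rho> \<pi> K t s * (\<pi> s a * K s a s'))"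
      by (simp add: sum_distrib_left)
    also have "\<dots> = (\<Sum>s\<in>UNIV. \<Sum>s'\<in>UNIV. \<Sum>a\<in>UNIV. state_dist \<rho> \<pi> K t s * (\<pi> s a * K s a s'))"
      by (rule sum.swap)
    also have "\<dots> = (\<Sum>s\<in>UNIV. \<Sum>a\<in>UNIV. \<Sum>s'\<in>UNIV. state_dist \<rho> \<pi> K t s * (\<pi> s a * K s a s'))"
      by (intro sum.cong refl sum.swap)
    also have "\<dots> = (\<Sum>s\<in>UNIV. state_dist \<rho> \<pi> K t s * (\<Sum>a\<in>UNIV. \<pi> s a * (\<Sum>s'\<in>UNIV. K s a s')))"
      by (simp add: sum_distrib_left)
    finally show ?thesis .
  qed
  also have "\<dots> = sum (state_dist \<rho> \<pi> K t) UNIV" using assms by simp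
  finally show ?case using Suc by simp
qed



lemma V_pi_eq:
  fixes P :: "'s::finite \<Rightarrow> 'a::finite \<Rightarrow> 's \<Rightarrow> real"
  assumes gamma: "0 \<le> \<gamma>" "\<gamma> < 1"
    and riskm: "\<And>s a. convex_risk (risk (P s a))"
    and th: "\<And>s. \<theta> s \<in> prob_simplex"
  shows "V_pi risk P r \<gamma> \<theta> s = (\<Sum>a\<in>UNIV. \<theta> s a * (r s a - \<gamma> * risk (P s a) (V_pi risk P r \<gamma> \<theta>)))"
proof -
  define F where "F V s = (\<Sum>a\<in>UNIV. \<theta> s a * (r s a - \<gamma> * risk (P s a) V))" for V s
  have "\<exists>!V. F V = V"
  proof (rule contraction_fix[OF gamma])
    fix V W s
    show "\<bar>F V s - F W s\<bar> \<le> \<gamma> * supn (\<lambda>s. V s - W s)"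
      unfolding F_def
    proof (rule avg_contr)
      show "0 \<le> \<theta> s a" for a using th[of s] by (simp add: prob_simplex_def)
      show "sum (\<theta> s) UNIV = 1" using th[of s] by (simp add: prob_simplex_def)
      fix a
      have "\<bar>(r s a - \<gamma> * risk (P s a) V) - (r s a - \<gamma> * risk (P s a) W)\<bar> = \<gamma> * \<bar>risk (P s a) V - risk (P s a) W\<bar>"
        using gamma by (simp add: abs_mult right_diff_distrib[symmetric] abs_minus_commute)
      also have "\<dots> \<le> \<gamma> * supn (\<lambda>s. V s - W s)"
        using risk_lip[OF riskm] gamma by (simp add: mult_left_mono)
      finally show "\<bar>(r s a - \<gamma> * risk (P s a) V) - (r s a - \<gamma> * risk (P s a) W)\<bar> \<le> \<gamma> * supn (\<lambda>s. V s - W s)" .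
    qed
  qed
  then have "\<exists>!V. \<forall>s. V s = F V s" by (metis ext)
  then have "\<forall>s. V_pi risk P r \<gamma> \<theta> s = F (V_pi risk P r \<gamma> \<theta>) s"
    unfolding V_pi_def F_def[abs_def] by (rule theI')
  then show ?thesis by (simp add: F_def)
qed

lemma V_star_eq:
  fixes P :: "'s::finite \<Rightarrow> 'a::finite \<Rightarrow> 's \<Rightarrow> real"
  assumes gamma: "0 \<le> \<gamma>" "\<gamma> < 1"
    and riskm: "\<And>s a. convex_risk (risk (P s a))"
  shows "V_star risk P r \<gamma> s = (MAX a. r s a - \<gamma> * risk (P s a) (V_star risk P r \<gamma>))"
proof -
  define F where "F V s = (MAX a. r s a - \<gamma> * risk (P s a) V)" for V s
  have "\<exists>!V. F V = V"
  proof (rule contraction_fix[OF gamma])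
    fix V W s
    show "\<bar>F V s - F W s\<bar> \<le> \<gamma> * supn (\<lambda>s. V s - W s)"
      unfolding F_def
    proof (rule max_contr)
      fix a
      have "\<bar>(r s a - \<gamma> * risk (P s a) V) - (r s a - \<gamma> * risk (P s a) W)\<bar> = \<gamma> * \<bar>risk (P s a) V - risk (P s a) W\<bar>"
        using gamma by (simp add: abs_mult right_diff_distrib[symmetric] abs_minus_commute)
      also have "\<dots> \<le> \<gamma> * supn (\<lambda>s. V s - W s)"
        using risk_lip[OF riskm] gamma by (simp add: mult_left_mono)
      finally show "\<bar>(r s a - \<gamma> * risk (P s a) V) - (r s a - \<gamma> * risk (P s a) W)\<bar> \<le> \<gamma> * supn (\<lambda>s. V s - W s)" .
    qed
  qed
  then have "\<exists>!V. \<forall>s. V s = F V s" by (metis ext)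
  then have "\<forall>s. V_star risk P r \<gamma> s = F (V_star risk P r \<gamma>) s"
    unfolding V_star_def F_def[abs_def] by (rule theI')
  then show ?thesis by (simp add: F_def)
qed

lemma worst_sub:
  assumes riskm: "\<And>s a. convex_risk (risk (P s a))"
    and Ph: "worst_kernel risk P V Phat"
  shows "risk (P s a) V - risk (P s a) W \<le> (\<Sum>s'\<in>UNIV. Phat s a s' * (W s' - V s'))"
proof -
  obtain \<mu> where mu: "\<mu> \<in> prob_simplex" and sg: "\<And>W. risk (P s a) V - (\<Sum>s\<in>UNIV. \<mu> s * (W s - V s)) \<le> risk (P s a) W"
    using risk_subgrad[OF riskm, of s a V] by blast
  have pmu: "penalty risk \<mu> (P s a) \<le> ereal (- risk (P s a) V - (\<Sum>s'\<in>UNIV. \<mu> s' * V s'))"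
    unfolding penalty_def
  proof (rule SUP_least)
    fix W
    have "(\<Sum>s\<in>UNIV. \<mu> s * (W s - V s)) = (\<Sum>s\<in>UNIV. \<mu> s * W s) - (\<Sum>s\<in>UNIV. \<mu> s * V s)"
      by (simp add: right_diff_distrib sum_subtractf)
    then show "ereal (- risk (P s a) W - (\<Sum>s\<in>UNIV. \<mu> s * W s)) \<le> ereal (- risk (P s a) V - (\<Sum>s'\<in>UNIV. \<mu> s' * V s'))"
      using sg[of W] by simp
  qed
  have "penalty risk (Phat s a) (P s a) + ereal (\<Sum>s'\<in>UNIV. Phat s a s' * V s')
        \<le> penalty risk \<mu> (P s a) + ereal (\<Sum>s'\<in>UNIV. \<mu> s' * V s')"
    using Ph mu unfolding worst_kernel_def by blast
  also have "\<dots> \<le> ereal (- risk (P s a) V - (\<Sum>s'\<in>UNIV. \<mu> s' * V s')) + ereal (\<Sum>s'\<in>UNIV. \<mu> s' * V s')"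
    by (rule add_right_mono[OF pmu])
  also have "\<dots> = ereal (- risk (P s a) V)" by simp
  finally have up: "penalty risk (Phat s a) (P s a) + ereal (\<Sum>s'\<in>UNIV. Phat s a s' * V s') \<le> ereal (- risk (P s a) V)" .
  have lo: "ereal (- risk (P s a) W - (\<Sum>s'\<in>UNIV. Phat s a s' * W s')) \<le> penalty risk (Phat s a) (P s a)"
    unfolding penalty_def by (rule SUP_upper) simp
  have "ereal (- risk (P s a) W - (\<Sum>s'\<in>UNIV. Phat s a s' * W s')) + ereal (\<Sum>s'\<in>UNIV. Phat s a s' * V s') \<le> ereal (- risk (P s a) V)"
    using add_right_mono[OF lo] up by (rule order.trans)
  then have "- risk (P s a) W - (\<Sum>s'\<in>UNIV. Phat s a s' * W s') + (\<Sum>s'\<in>UNIV. Phat s a s' * V s') \<le> - risk (P s a) V"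
    by simp
  moreover have "(\<Sum>s'\<in>UNIV. Phat s a s' * (W s' - V s')) = (\<Sum>s'\<in>UNIV. Phat s a s' * W s') - (\<Sum>s'\<in>UNIV. Phat s a s' * V s')"
    by (simp add: right_diff_distrib sum_subtractf)
  ultimately show ?thesis by linarith
qed



lemma unroll:
  fixes \<Delta> g :: "'s::finite \<Rightarrow> real" and K :: "'s \<Rightarrow> 's \<Rightarrow> real" and \<mu> :: "nat \<Rightarrow> 's \<Rightarrow> real"
  assumes gamma: "0 \<le> \<gamma>" "\<gamma> < 1"
    and step: "\<And>s. \<Delta> s \<le> g s + \<gamma> * (\<Sum>s'\<in>UNIV. K s s' * \<Delta> s')"
    and muS: "\<And>t s'. \<mu> (Suc t) s' = (\<Sum>s\<in>UNIV. \<mu> t s * K s s')"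
    and munn: "\<And>t s. 0 \<le> \<mu> t s" and mu1: "\<And>t s. \<mu> t s \<le> 1"
  shows "(\<Sum>s\<in>UNIV. \<mu> 0 s * \<Delta> s) \<le> (\<Sum>s\<in>UNIV. g s * (\<Sum>t. \<gamma> ^ t * \<mu> t s))"
proof -
  define A where "A n = (\<Sum>t<n. \<gamma> ^ t * (\<Sum>s\<in>UNIV. \<mu> t s * g s))" for n
  define B where "B n = \<gamma> ^ n * (\<Sum>s\<in>UNIV. \<mu> n s * \<Delta> s)" for n
  have one: "(\<Sum>s\<in>UNIV. \<mu> n s * \<Delta> s) \<le> (\<Sum>s\<in>UNIV. \<mu> n s * g s) + \<gamma> * (\<Sum>s\<in>UNIV. \<mu> (Suc n) s * \<Delta> s)" for n
  proof -
    have "(\<Sum>s\<in>UNIV. \<mu> n s * \<Delta> s) \<le> (\<Sum>s\<in>UNIV. \<mu> n s * (g s + \<gamma> * (\<Sum>s'\<in>UNIV. K s s' * \<Delta> s')))"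
      by (rule sum_mono) (rule mult_left_mono[OF step munn])
    also have "\<dots> = (\<Sum>s\<in>UNIV. \<mu> n s * g s) + \<gamma> * (\<Sum>s\<in>UNIV. \<Sum>s'\<in>UNIV. \<mu> n s * K s s' * \<Delta> s')"
      by (simp add: algebra_simps sum.distrib sum_distrib_left)
    also have "(\<Sum>s\<in>UNIV. \<Sum>s'\<in>UNIV. \<mu> n s * K s s' * \<Delta> s') = (\<Sum>s'\<in>UNIV. \<Sum>s\<in>UNIV. \<mu> n s * K s s' * \<Delta> s')"
      by (rule sum.swap)
    also have "\<dots> = (\<Sum>s'\<in>UNIV. \<mu> (Suc n) s' * \<Delta> s')"
      by (simp add: muS sum_distrib_right)
    finally show ?thesis .
  qed
  have I: "(\<Sum>s\<in>UNIV. \<mu> 0 s * \<Delta> s) \<le> A n + B n" for n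
  proof (induction n)
    case 0 then show ?case by (simp add: A_def B_def)
  next
    case (Suc n)
    have "B n \<le> \<gamma> ^ n * (\<Sum>s\<in>UNIV. \<mu> n s * g s) + B (Suc n)"
      using mult_left_mono[OF one[of n], of "\<gamma> ^ n"] gamma by (simp add: B_def algebra_simps)
    then show ?case using Suc by (simp add: A_def)
  qed
  have summ: "summable (\<lambda>t. \<gamma> ^ t * \<mu> t s)" for s
    by (rule summable_comparison_test[where g="\<lambda>t. \<gamma> ^ t"])
       (use gamma munn mu1 in \<open>auto intro!: summable_geometric mult_left_le\<close>)
  have Alim: "A \<longlonglongrightarrow> (\<Sum>s\<in>UNIV. g s * (\<Sum>t. \<gamma> ^ t * \<mu> t s))"
  proof -
    have "A = (\<lambda>n. (\<Sum>s\<in>UNIV. g s * (\<Sum>t<n. \<gamma> ^ t * \<mu> t s)))"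
    proof
      fix n
      have "A n = (\<Sum>t<n. \<Sum>s\<in>UNIV. g s * (\<gamma> ^ t * \<mu> t s))"
        unfolding A_def by (simp add: sum_distrib_left algebra_simps)
      also have "\<dots> = (\<Sum>s\<in>UNIV. \<Sum>t<n. g s * (\<gamma> ^ t * \<mu> t s))" by (rule sum.swap)
      also have "\<dots> = (\<Sum>s\<in>UNIV. g s * (\<Sum>t<n. \<gamma> ^ t * \<mu> t s))" by (simp add: sum_distrib_left)
      finally show "A n = (\<Sum>s\<in>UNIV. g s * (\<Sum>t<n. \<gamma> ^ t * \<mu> t s))" .
    qed
    moreover have "(\<lambda>n. \<Sum>s\<in>UNIV. g s * (\<Sum>t<n. \<gamma> ^ t * \<mu> t s)) \<longlonglongrightarrow> (\<Sum>s\<in>UNIV. g s * (\<Sum>t. \<gamma> ^ t * \<mu> t s))"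
      by (intro tendsto_intros summable_LIMSEQ summ)
    ultimately show ?thesis by simp
  qed
  have Blim: "B \<longlonglongrightarrow> 0"
  proof (rule Lim_null_comparison)
    show "\<forall>\<^sub>F n in sequentially. norm (B n) \<le> \<gamma> ^ n * (\<Sum>s\<in>UNIV. \<bar>\<Delta> s\<bar>)"
    proof (rule always_eventually, rule allI)
      fix n
      have "\<bar>\<Sum>s\<in>UNIV. \<mu> n s * \<Delta> s\<bar> \<le> (\<Sum>s\<in>UNIV. \<bar>\<mu> n s * \<Delta> s\<bar>)" by (rule sum_abs)
      also have "\<dots> \<le> (\<Sum>s\<in>UNIV. \<bar>\<Delta> s\<bar>)"
        by (rule sum_mono) (simp add: abs_mult munn mu1 mult_left_le_one_le)
      finally show "norm (B n) \<le> \<gamma> ^ n * (\<Sum>s\<in>UNIV. \<bar>\<Delta> s\<bar>)"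
        using gamma by (simp add: B_def abs_mult mult_left_mono)
    qed
    show "(\<lambda>n. \<gamma> ^ n * (\<Sum>s\<in>UNIV. \<bar>\<Delta> s\<bar>)) \<longlonglongrightarrow> 0"
      using gamma by (intro tendsto_mult_left_zero LIMSEQ_power_zero) simp
  qed
  have "(\<lambda>n. A n + B n) \<longlonglongrightarrow> (\<Sum>s\<in>UNIV. g s * (\<Sum>t. \<gamma> ^ t * \<mu> t s)) + 0"
    by (rule tendsto_add[OF Alim Blim])
  then show ?thesis using I by (intro LIMSEQ_le_const) auto
qed



theorem mainTheorem8:
  fixes P :: "'s::finite \<Rightarrow> 'a::finite \<Rightarrow> 's \<Rightarrow> real"
    and r :: "'s \<Rightarrow> 'a \<Rightarrow> real"
    and \<gamma> :: real
    and \<rho> :: "'s \<Rightarrow> real"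
    and risk :: "('s \<Rightarrow> real) \<Rightarrow> ('s \<Rightarrow> real) \<Rightarrow> real"
    and \<theta> :: "'s \<Rightarrow> 'a \<Rightarrow> real"
    and Phat :: "'s \<Rightarrow> 'a \<Rightarrow> 's \<Rightarrow> real"
    and astar :: "'s \<Rightarrow> 'a"
  assumes P: "\<And>s a. P s a \<in> prob_simplex"
    and r: "\<And>s a. 0 \<le> r s a \<and> r s a \<le> 1"
    and gamma: "0 \<le> \<gamma>" "\<gamma> < 1"
    and rho: "\<rho> \<in> prob_simplex"
    and riskm: "\<And>s a. convex_risk (risk (P s a))"
    and theta: "\<And>s. \<theta> s \<in> prob_simplex"
    and Phat: "worst_kernel risk P (V_pi risk P r \<gamma> \<theta>) Phat"
    and astar: "\<And>s b. r s b - \<gamma> * risk (P s b) (V_star risk P r \<gamma>)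
                      \<le> r s (astar s) - \<gamma> * risk (P s (astar s)) (V_star risk P r \<gamma>)"
    and dpos: "\<And>s. occ \<gamma> \<rho> \<theta> Phat s > 0"
  shows "(\<Sum>s\<in>UNIV. \<rho> s * (V_star risk P r \<gamma> s - V_pi risk P r \<gamma> \<theta> s))
         \<le> (MAX s. occ \<gamma> \<rho> (det_policy astar) Phat s / occ \<gamma> \<rho> \<theta> Phat s)
           * (SUP pb \<in> {pb. \<forall>s. pb s \<in> prob_simplex}.
                (\<Sum>s\<in>UNIV. \<Sum>a\<in>UNIV. (pb s a - \<theta> s a)
                    * (1 / (1 - \<gamma>) * occ \<gamma> \<rho> \<theta> Phat s * Q_pi risk P r \<gamma> \<theta> s a)))"
proof -
  let ?V = "V_pi risk P r \<gamma> \<theta>"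
  let ?Vs = "V_star risk P r \<gamma>"
  let ?Q = "Q_pi risk P r \<gamma> \<theta>"
  let ?ds = "occ \<gamma> \<rho> (det_policy astar) Phat"
  let ?dt = "occ \<gamma> \<rho> \<theta> Phat"
  let ?C = "\<lambda>s a. 1 / (1 - \<gamma>) * ?dt s * ?Q s a"
  let ?J = "\<lambda>pb. (\<Sum>s\<in>UNIV. \<Sum>a\<in>UNIV. (pb s a - \<theta> s a) * ?C s a)"
  have thnn: "\<And>s a. 0 \<le> \<theta> s a" and thsum: "\<And>s. sum (\<theta> s) UNIV = 1"
    using theta by (auto simp: prob_simplex_def)
  have Phnn: "\<And>s a s'. 0 \<le> Phat s a s'" and Phsum: "\<And>s a. sum (Phat s a) UNIV = 1"
    using Phat by (auto simp: worst_kernel_def prob_simplex_def)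
  have rhonn: "\<And>s. 0 \<le> \<rho> s" and rhosum: "sum \<rho> UNIV = 1"
    using rho by (auto simp: prob_simplex_def)
  have Veq: "?V s = (\<Sum>a\<in>UNIV. \<theta> s a * ?Q s a)" for s
    using V_pi_eq[where risk=risk and P=P and \<theta>=\<theta> and r=r, OF gamma riskm theta] by (simp add: Q_pi_def)
  have Vseq: "?Vs s = r s (astar s) - \<gamma> * risk (P s (astar s)) ?Vs" for s
  proof -
    have "?Vs s = (MAX a. r s a - \<gamma> * risk (P s a) ?Vs)" by (rule V_star_eq[where risk=risk and P=P and r=r, OF gamma riskm])
    also have "\<dots> = r s (astar s) - \<gamma> * risk (P s (astar s)) ?Vs"
      by (rule Max_eqI) (use astar in auto)
    finally show ?thesis .
  qed
  define g where "g s = ?Q s (astar s) - ?V s" for s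
  define K where "K s s' = Phat s (astar s) s'" for s s'
  define \<Delta> where "\<Delta> s = ?Vs s - ?V s" for s
  have step: "\<Delta> s \<le> g s + \<gamma> * (\<Sum>s'\<in>UNIV. K s s' * \<Delta> s')" for s
  proof -
    have "risk (P s (astar s)) ?V - risk (P s (astar s)) ?Vs \<le> (\<Sum>s'\<in>UNIV. K s s' * \<Delta> s')"
      unfolding K_def \<Delta>_def by (rule worst_sub[OF riskm Phat])
    then have "\<gamma> * (risk (P s (astar s)) ?V - risk (P s (astar s)) ?Vs) \<le> \<gamma> * (\<Sum>s'\<in>UNIV. K s s' * \<Delta> s')"
      using gamma by (simp add: mult_left_mono)
    then show ?thesis unfolding \<Delta>_def g_def Q_pi_def using Vseq[of s] by (simp add: algebra_simps)
  qed
  define \<mu> where "\<mu> = state_dist \<rho> (det_policy astar) Phat"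
  have detnn: "\<And>s a. 0 \<le> det_policy astar s a" by (simp add: det_policy_def)
  have detsum: "\<And>s. sum (det_policy astar s) UNIV = 1" by (simp add: det_policy_def)
  have munn: "0 \<le> \<mu> t s" for t s
    unfolding \<mu>_def by (rule sd_nonneg[OF rhonn detnn Phnn])
  have musum: "sum (\<mu> t) UNIV = 1" for t
    unfolding \<mu>_def by (rule sd_sum[OF rhosum detsum Phsum])
  have mu1: "\<mu> t s \<le> 1" for t s
    using member_le_sum[of s UNIV "\<mu> t"] munn musum by simp
  have muS: "\<mu> (Suc t) s' = (\<Sum>s\<in>UNIV. \<mu> t s * K s s')" for t s'
  proof -
    have "(\<Sum>a\<in>UNIV. det_policy astar s a * Phat s a s') = K s s'" for s
    proof -
      have "(\<Sum>a\<in>UNIV. det_policy astar s a * Phat s a s') = (\<Sum>a\<in>UNIV. if a = astar s then Phat s a s' else 0)"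
        by (intro sum.cong refl) (simp add: det_policy_def)
      then show ?thesis by (simp add: K_def)
    qed
    then show ?thesis by (simp add: \<mu>_def)
  qed
  have mu0: "\<mu> 0 = \<rho>" by (simp add: \<mu>_def)
  have U: "(\<Sum>s\<in>UNIV. \<rho> s * \<Delta> s) \<le> (\<Sum>s\<in>UNIV. g s * (\<Sum>t. \<gamma> ^ t * \<mu> t s))"
    using unroll[where \<Delta>=\<Delta> and g=g and K=K and \<mu>=\<mu>, OF gamma step muS munn mu1] by (simp add: mu0)
  have occs: "(\<Sum>t. \<gamma> ^ t * \<mu> t s) = ?ds s / (1 - \<gamma>)" for s
  proof -
    have "1 - \<gamma> \<noteq> 0" using gamma by simp
    then show ?thesis unfolding occ_def \<mu>_def by simp
  qed
  have dsnn: "0 \<le> ?ds s" for s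
  proof -
    have "summable (\<lambda>t. \<gamma> ^ t * \<mu> t s)"
      by (rule summable_comparison_test[where g="\<lambda>t. \<gamma> ^ t"])
         (use gamma munn mu1 in \<open>auto intro!: summable_geometric mult_left_le\<close>)
    then have "0 \<le> (\<Sum>t. \<gamma> ^ t * \<mu> t s)" using gamma munn by (intro suminf_nonneg) auto
    then have "0 \<le> (\<Sum>t. \<gamma> ^ t * state_dist \<rho> (det_policy astar) Phat t s)" by (simp add: \<mu>_def)
    then show ?thesis using gamma unfolding occ_def by simp
  qed
  have "\<exists>am. \<forall>s b. ?Q s b \<le> ?Q s (am s)"
  proof -
    have "\<forall>s. \<exists>a. \<forall>b. ?Q s b \<le> ?Q s a"
    proof
      fix s
      have "Max (range (?Q s)) \<in> range (?Q s)" by (rule Max_in) auto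
      then obtain a where a: "?Q s a = Max (range (?Q s))" by (metis (no_types, lifting) imageE)
      have "\<forall>b. ?Q s b \<le> ?Q s a" unfolding a by (auto intro: Max_ge)
      then show "\<exists>a. \<forall>b. ?Q s b \<le> ?Q s a" by blast
    qed
    then show ?thesis by metis
  qed
  then obtain am where am: "\<And>s b. ?Q s b \<le> ?Q s (am s)" by blast
  define Y where "Y s = ?Q s (am s) - ?V s" for s
  have gY: "g s \<le> Y s" for s using am[of s "astar s"] by (simp add: g_def Y_def)
  have Ynn: "0 \<le> Y s" for s
  proof -
    have "?V s \<le> (\<Sum>a\<in>UNIV. \<theta> s a * ?Q s (am s))"
      unfolding Veq by (rule sum_mono) (simp add: am thnn mult_left_mono)
    also have "\<dots> = ?Q s (am s)" using thsum[of s] by (simp add: sum_distrib_right[symmetric])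
    finally show ?thesis by (simp add: Y_def)
  qed
  define R where "R = (MAX s. ?ds s / ?dt s)"
  have Rge: "?ds s / ?dt s \<le> R" for s unfolding R_def by (rule Max_ge) auto
  have Rnn: "0 \<le> R" using Rge[of undefined] dsnn[of undefined] dpos[of undefined] by (smt (verit) divide_nonneg_pos)
  have dsR: "?ds s \<le> R * ?dt s" for s
    using Rge[of s] dpos[of s] by (simp add: pos_divide_le_eq)
  have Jg: "?J (det_policy am) = (\<Sum>s\<in>UNIV. Y s * ?dt s / (1 - \<gamma>))"
  proof (rule sum.cong[OF refl])
    fix s
    have "(\<Sum>a\<in>UNIV. (det_policy am s a - \<theta> s a) * ?C s a)
        = (\<Sum>a\<in>UNIV. det_policy am s a * ?C s a) - (\<Sum>a\<in>UNIV. \<theta> s a * ?C s a)"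
      by (simp only: left_diff_distrib sum_subtractf)
    also have "(\<Sum>a\<in>UNIV. det_policy am s a * ?C s a) = ?C s (am s)"
    proof -
      have "(\<Sum>a\<in>UNIV. det_policy am s a * ?C s a) = (\<Sum>a\<in>UNIV. if a = am s then ?C s a else 0)"
        by (intro sum.cong refl) (simp add: det_policy_def)
      then show ?thesis by simp
    qed
    also have "(\<Sum>a\<in>UNIV. \<theta> s a * ?C s a) = 1 / (1 - \<gamma>) * ?dt s * ?V s"
      unfolding Veq by (simp add: sum_distrib_left algebra_simps)
    also have "?C s (am s) - 1 / (1 - \<gamma>) * ?dt s * ?V s = Y s * ?dt s / (1 - \<gamma>)"
      by (simp add: Y_def algebra_simps diff_divide_distrib)
    finally show "(\<Sum>a\<in>UNIV. (det_policy am s a - \<theta> s a) * ?C s a) = Y s * ?dt s / (1 - \<gamma>)" .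
  qed
  have bdd: "bdd_above (?J ` {pb. \<forall>s. pb s \<in> prob_simplex})"
  proof (rule bdd_aboveI2)
    fix pb :: "'s \<Rightarrow> 'a \<Rightarrow> real" assume "pb \<in> {pb. \<forall>s. pb s \<in> prob_simplex}"
    then have pb: "\<And>s a. 0 \<le> pb s a" "\<And>s. sum (pb s) UNIV = 1" by (auto simp: prob_simplex_def)
    have pb1: "pb s a \<le> 1" for s a using member_le_sum[of a UNIV "pb s"] pb by simp
    have th1: "\<theta> s a \<le> 1" for s a using member_le_sum[of a UNIV "\<theta> s"] thnn thsum by simp
    show "?J pb \<le> (\<Sum>s\<in>UNIV. \<Sum>a\<in>UNIV. \<bar>?C s a\<bar>)"
    proof (intro sum_mono)
      fix s a
      have "\<bar>pb s a - \<theta> s a\<bar> \<le> 1" using pb(1)[of s a] pb1[of s a] thnn[of s a] th1[of s a] by linarith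
      then have "\<bar>(pb s a - \<theta> s a) * ?C s a\<bar> \<le> \<bar>?C s a\<bar>"
        unfolding abs_mult[of "pb s a - \<theta> s a"] by (metis abs_ge_zero mult_left_le_one_le)
      then show "(pb s a - \<theta> s a) * ?C s a \<le> \<bar>?C s a\<bar>" by linarith
    qed
  qed
  have greedy_in: "det_policy am \<in> {pb. \<forall>s. pb s \<in> prob_simplex}"
    by (simp add: prob_simplex_def det_policy_def)
  have JS: "?J (det_policy am) \<le> (SUP pb \<in> {pb. \<forall>s. pb s \<in> prob_simplex}. ?J pb)"
    by (rule cSUP_upper[OF greedy_in bdd])
  have "(\<Sum>s\<in>UNIV. \<rho> s * (?Vs s - ?V s)) \<le> (\<Sum>s\<in>UNIV. g s * (?ds s / (1 - \<gamma>)))"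
    using U by (simp add: \<Delta>_def occs)
  also have "\<dots> \<le> (\<Sum>s\<in>UNIV. Y s * (R * ?dt s / (1 - \<gamma>)))"
  proof (rule sum_mono)
    fix s
    have "g s * (?ds s / (1 - \<gamma>)) \<le> Y s * (?ds s / (1 - \<gamma>))"
      using gY[of s] dsnn[of s] gamma by (intro mult_right_mono) auto
    also have "\<dots> \<le> Y s * (R * ?dt s / (1 - \<gamma>))"
      using dsR[of s] Ynn[of s] gamma by (intro mult_left_mono divide_right_mono) auto
    finally show "g s * (?ds s / (1 - \<gamma>)) \<le> Y s * (R * ?dt s / (1 - \<gamma>))" .
  qed
  also have "\<dots> = R * ?J (det_policy am)"
    unfolding Jg by (simp add: sum_distrib_left algebra_simps)
  also have "\<dots> \<le> R * (SUP pb \<in> {pb. \<forall>s. pb s \<in> prob_simplex}. ?J pb)"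
    by (rule mult_left_mono[OF JS Rnn])
  finally show ?thesis unfolding R_def .
qed

end
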